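(* Suppose Assumption A2 holds and $F^*>-\infty$. Then Algorithm (2-RCD), with the pair $\{i_k,j_k\}$ drawn i.i.d. uniformly among the $N(N-1)/2$ unordered pairs of distinct indices, generates a sequence $x^k$ satisfying, for all $k\ge0$, $$\min_{0\le l\le k}E\left[\left(M_2(x^l,\Gamma)\right)^2\right]\le\frac{N\,(F(x^0)-F^* )}{k+1}.$$
   Context: Block structure: $n=\sum_{i=1}^N n_i$ with $N\ge2$, $I_n=[U_1\ \dots\ U_N]$, $x_i=U_i^Tx$, $\nabla_if(x)=U_i^T\nabla f(x)$, $a_i=U_i^Ta$; for $i\ne j$, $s_{ij}=[s_i^T\ s_j^T]^T$, $\nabla_{ij}f(x)=[\nabla_if(x)^T\ \nabla_jf(x)^T]^T$, and $x+s_{ij}$ means $x+U_is_i+U_js_j$. Problem: $F^*=\min\{F(x):=f(x)+h(x):\ a^Tx=b\}$ with $a\in\mathbb{R}^n$ nonzero. Assumption A2: (i) $f$ is differentiable and there are constants $L_{ij}=L_{ji}>0$ with $\|\nabla_{ij}f(x+U_is_i+U_js_j)-\nabla_{ij}f(x)\|\le L_{ij}\|s_{ij}\|$ for all $s_{ij}$, $x$, $i,j=1,\dots,N$; (ii) $h$ is proper, convex, continuous, $h(x)=\sum_{i=1}^n h_i(x_i)$ with each $h_i:\mathbb{R}\to\mathbb{R}$ convex. Algorithm (2-RCD): given $x^0$ with $a^Tx^0=b$, for $k\ge0$ choose randomly a pair $(i_k,j_k)$, $i_k\ne j_k$, compute $d_{i_kj_k}=\arg\min\{ f(x^k)+\langle\nabla_{i_kj_k}f(x^k),s_{i_kj_k}\rangle+\frac{L_{i_kj_k}}{2}\|s_{i_kj_k}\|^2+h(x^k+s_{i_kj_k})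 :\ a_{i_k}^Ts_{i_k}+a_{j_k}^Ts_{j_k}=0\}$, and set $x^{k+1}=x^k+U_{i_k}d_{i_k}+U_{j_k}d_{j_k}$. Notation: $\Gamma_i=\frac1N\sum_{j=1}^N L_{ij}$. For $\Lambda\in\mathbb{R}^N$ with positive entries, $\|x\|_\Lambda=(\sum_i\Lambda_i\|x_i\|^2)^{1/2}$, $\|y\|_\Lambda^*=(\sum_i\Lambda_i^{-1}\|y_i\|^2)^{1/2}$, $D_\Lambda=\mathrm{diag}(\Lambda_1I_{n_1},\dots,\Lambda_NI_{n_N})$, $S=\{s:a^Ts=0\}$, $d_\Lambda(x)=\arg\min_{s\in S} f(x)+\langle\nabla f(x),s\rangle+\frac12\|s\|_\Lambda^2+h(x+s)$. Optimality measure: $M_2(x,\Gamma)=\|D_\Gamma\,d_{N\Gamma}(x)\|_\Gamma^*$. *)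

theory Defs
  imports "HOL-Analysis.Analysis" "HOL-Probability.Probability_Mass_Function"
begin

text \<open>Block structure: coordinates of type 'n; blk c is the (0-based) index of the block
  containing coordinate c. Blocks are indexed by 0,...,N-1.\<close>

definition block_supp :: "('n \<Rightarrow> nat) \<Rightarrow> nat set \<Rightarrow> (real ^ 'n) set" where
  "block_supp blk P = {s. \<forall>c. blk c \<notin> P \<longrightarrow> s $ c = 0}"

text \<open>Restriction of a vector to the blocks in P (i.e. the stacked block vector, padded with zeros).\<close>
definition block_restrict :: "('n \<Rightarrow> nat) \<Rightarrow> nat set \<Rightarrow> real ^ 'n \<Rightarrow> real ^ 'n" where
  "block_restrict blk P v = (\<chi> c. if blk c \<in> P then v $ c else 0)"

definition argmin_on :: "'a set \<Rightarrow> ('a \<Rightarrow> real) \<Rightarrow> 'a" where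
  "argmin_on S \<phi> = (SOME s. s \<in> S \<and> (\<forall>t\<in>S. \<phi> s \<le> \<phi> t))"

definition wnorm :: "('n \<Rightarrow> nat) \<Rightarrow> (nat \<Rightarrow> real) \<Rightarrow> real ^ 'n \<Rightarrow> real" where
  "wnorm blk \<Lambda> x = sqrt (\<Sum>c\<in>UNIV. \<Lambda> (blk c) * (x $ c)^2)"

definition wnorm_dual :: "('n \<Rightarrow> nat) \<Rightarrow> (nat \<Rightarrow> real) \<Rightarrow> real ^ 'n \<Rightarrow> real" where
  "wnorm_dual blk \<Lambda> y = sqrt (\<Sum>c\<in>UNIV. (y $ c)^2 / \<Lambda> (blk c))"

definition Dmat :: "('n \<Rightarrow> nat) \<Rightarrow> (nat \<Rightarrow> real) \<Rightarrow> real ^ 'n \<Rightarrow> real ^ 'n" where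
  "Dmat blk \<Lambda> x = (\<chi> c. \<Lambda> (blk c) * x $ c)"

definition Gam :: "nat \<Rightarrow> (nat \<Rightarrow> nat \<Rightarrow> real) \<Rightarrow> nat \<Rightarrow> real" where
  "Gam N L i = (1 / real N) * (\<Sum>j<N. L i j)"

definition dLam :: "('n \<Rightarrow> nat) \<Rightarrow> (nat \<Rightarrow> real) \<Rightarrow> real ^ 'n \<Rightarrow> (real ^ 'n \<Rightarrow> real)
    \<Rightarrow> (real ^ 'n \<Rightarrow> real ^ 'n) \<Rightarrow> (real ^ 'n \<Rightarrow> real) \<Rightarrow> real ^ 'n \<Rightarrow> real ^ 'n" where
  "dLam blk \<Lambda> a f grad h x =
     argmin_on {s. a \<bullet> s = 0}
       (\<lambda>s. f x + grad x \<bullet> s + (1/2) * (wnorm blk \<Lambda> s)^2 + h (x + s))"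

definition M2 :: "nat \<Rightarrow> ('n \<Rightarrow> nat) \<Rightarrow> (nat \<Rightarrow> nat \<Rightarrow> real) \<Rightarrow> real ^ 'n \<Rightarrow> (real ^ 'n \<Rightarrow> real)
    \<Rightarrow> (real ^ 'n \<Rightarrow> real ^ 'n) \<Rightarrow> (real ^ 'n \<Rightarrow> real) \<Rightarrow> real ^ 'n \<Rightarrow> real" where
  "M2 N blk L a f grad h x =
     wnorm_dual blk (Gam N L)
       (Dmat blk (Gam N L) (dLam blk (\<lambda>i. real N * Gam N L i) a f grad h x))"

definition pair_dir :: "('n \<Rightarrow> nat) \<Rightarrow> (nat \<Rightarrow> nat \<Rightarrow> real) \<Rightarrow> real ^ 'n \<Rightarrow> (real ^ 'n \<Rightarrow> real)
    \<Rightarrow> (real ^ 'n \<Rightarrow> real ^ 'n) \<Rightarrow> (real ^ 'n \<Rightarrow> real) \<Rightarrow> real ^ 'n \<Rightarrow> nat \<times> nat \<Rightarrow> real ^ 'n" where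
  "pair_dir blk L a f grad h x p =
     (case p of (i, j) \<Rightarrow>
        argmin_on (block_supp blk {i, j} \<inter> {s. a \<bullet> s = 0})
          (\<lambda>s. f x + grad x \<bullet> s + (L i j / 2) * (norm s)^2 + h (x + s)))"

text \<open>Uniform distribution over the N(N-1)/2 unordered pairs {i,j}, i \<noteq> j,
  each represented as (i,j) with i < j.\<close>
definition pair_pmf :: "nat \<Rightarrow> (nat \<times> nat) pmf" where
  "pair_pmf N = pmf_of_set {(i, j). i < j \<and> j < N}"

primrec rcd_iter :: "nat \<Rightarrow> ('n \<Rightarrow> nat) \<Rightarrow> (nat \<Rightarrow> nat \<Rightarrow> real) \<Rightarrow> real ^ 'n \<Rightarrow> (real ^ 'n \<Rightarrow> real)
    \<Rightarrow> (real ^ 'n \<Rightarrow> real ^ 'n) \<Rightarrow> (real ^ 'n \<Rightarrow> real) \<Rightarrow> real ^ 'n \<Rightarrow> nat \<Rightarrow> (real ^ 'n) pmf" where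
  "rcd_iter N blk L a f grad h x0 0 = return_pmf x0"
| "rcd_iter N blk L a f grad h x0 (Suc k) =
     bind_pmf (rcd_iter N blk L a f grad h x0 k)
       (\<lambda>x. map_pmf (\<lambda>p. x + pair_dir blk L a f grad h x p) (pair_pmf N))"

end

theory Submission
  imports Defs
begin




lemma convex_line_bound:
  fixes q :: "real \<Rightarrow> real"
  assumes c: "\<And>t u v. 0 \<le> t \<Longrightarrow> t \<le> 1 \<Longrightarrow> q ((1 - t) * u + t * v) \<le> (1 - t) * q u + t * q v"
    and s: "s \<ge> 1" and qa: "\<bar>q a\<bar> \<le> K" and q0: "\<bar>q 0\<bar> \<le> K"
  shows "q (s * a) \<ge> - 2 * K * s"
proof -
  have "q a \<le> (1 - 1/s) * q 0 + (1/s) * q (s*a)"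
    using c[of "1/s" 0 "s*a"] s by simp
  hence "s * q a \<le> s * ((1 - 1/s) * q 0 + (1/s) * q (s*a))"
    using s by (intro mult_left_mono) auto
  also have "\<dots> = (s - 1) * q 0 + q (s*a)" using s by (simp add: algebra_simps)
  finally have 1: "s * q a \<le> (s - 1) * q 0 + q (s*a)" .
  have 2: "s * q a \<ge> s * (-K)" using s qa by (intro mult_left_mono) auto
  have 3: "(s - 1) * q 0 \<le> (s - 1) * K" using s q0 by (intro mult_left_mono) auto
  have K: "K \<ge> 0" using q0 by linarith
  have 5: "q (s*a) \<ge> s * (-K) - (s - 1) * K" using 1 2 3 by linarith
  have 6: "s * (-K) - (s - 1) * K \<ge> -2 * K * s" using K by (simp add: algebra_simps)
  show ?thesis using 5 6 by linarith
qed

lemma convex_real_lower: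
  fixes q :: "real \<Rightarrow> real"
  assumes cv: "convex_on UNIV q"
  shows "\<exists>K\<ge>0. \<forall>y. q y \<ge> - K - K * \<bar>y\<bar>"
proof -
  define K0 where "K0 = \<bar>q 0\<bar> + \<bar>q 1\<bar> + \<bar>q (-1)\<bar>"
  have K0: "K0 \<ge> 0" unfolding K0_def by simp
  have b0: "\<bar>q 0\<bar> \<le> K0" and b1: "\<bar>q 1\<bar> \<le> K0" and bm1: "\<bar>q (-1)\<bar> \<le> K0"
    unfolding K0_def by auto
  have c: "q ((1 - t) * u + t * v) \<le> (1 - t) * q u + t * q v" if "0 \<le> t" "t \<le> 1" for t u v
    using convex_onD[OF cv, of t u v] that by simp
  have main: "q y \<ge> - 3*K0 - 3*K0 * \<bar>y\<bar>" for y
  proof (cases "\<bar>y\<bar> \<ge> 1")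
    case True
    show ?thesis
    proof (cases "y \<ge> 0")
      case True
      have "y \<ge> 1" using \<open>\<bar>y\<bar> \<ge> 1\<close> True by simp
      from convex_line_bound[OF c this b1 b0] have "q y \<ge> - 2 * K0 * y" by simp
      moreover have "- 2 * K0 * y \<ge> - 3*K0 - 3*K0 * \<bar>y\<bar>" 
      proof -
        have "K0 * y \<ge> 0" using mult_nonneg_nonneg[OF K0 True] .
        moreover have "-3*K0 - 3*K0*\<bar>y\<bar> = -3*K0 - 3*(K0*y)" "-2*K0*y = -2*(K0*y)" using True by auto
        ultimately show ?thesis using K0 by linarith
      qed
      ultimately show ?thesis by linarith
    next
      case False
      have "-y \<ge> 1" using \<open>\<bar>y\<bar> \<ge> 1\<close> False by simp
      from convex_line_bound[OF c this bm1 b0] have "q y \<ge> - 2 * K0 * (-y)" by simp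
      moreover have "- 2 * K0 * (-y) \<ge> - 3*K0 - 3*K0 * \<bar>y\<bar>" 
      proof -
        have "K0 * (-y) \<ge> 0" using mult_nonneg_nonneg[OF K0, of "-y"] False by simp
        moreover have "-3*K0 - 3*K0*\<bar>y\<bar> = -3*K0 - 3*(K0*(-y))" "-2*K0*(-y) = -2*(K0*(-y))" using False by auto
        ultimately show ?thesis using K0 by linarith
      qed
      ultimately show ?thesis by linarith
    qed
  next
    case False
    have "q 0 \<le> (1 - 1/2) * q y + (1/2) * q (-y)"
      using c[of "1/2" y "-y"] by simp
    moreover have "q (-y) \<le> K0"
    proof (cases "y \<ge> 0")
      case True
      have "q ((1 - y) * 0 + y * (-1)) \<le> (1 - y) * q 0 + y * q (-1)"
        using c[of y 0 "-1"] True False by simp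
      moreover have "(1 - y) * q 0 + y * q (-1) \<le> (1 - y) * K0 + y * K0"
        using True False b0 bm1 by (intro add_mono mult_left_mono) auto
      ultimately show ?thesis by (simp add: algebra_simps)
    next
      case f2: False
      have "q ((1 + y) * 0 + (-y) * 1) \<le> (1 + y) * q 0 + (-y) * q 1"
        using c[of "-y" 0 1] f2 False by simp
      moreover have "(1 + y) * q 0 + (-y) * q 1 \<le> (1 + y) * K0 + (-y) * K0"
        using f2 False b0 b1 by (intro add_mono mult_left_mono) auto
      ultimately show ?thesis by (simp add: algebra_simps)
    qed
    ultimately have "q y \<ge> 2 * q 0 - K0" by simp
    moreover have "q 0 \<ge> - K0" using b0 by simp
    moreover have "K0 * \<bar>y\<bar> \<ge> 0" using K0 by simp
    ultimately show ?thesis by linarith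
  qed
  show ?thesis using main K0 by (intro exI[of _ "3*K0"]) auto
qed



lemma argmin_props:
  fixes \<phi> :: "'a::euclidean_space \<Rightarrow> real"
  assumes K: "closed K" "z \<in> K" and cont: "continuous_on UNIV \<phi>" and mu: "\<mu> > 0"
    and lb: "\<And>s. \<phi> s \<ge> c - C * norm s + \<mu> * (norm s)^2"
  shows "argmin_on K \<phi> \<in> K \<and> (\<forall>t\<in>K. \<phi> (argmin_on K \<phi>) \<le> \<phi> t)"
proof -
  define S where "S = K \<inter> {s. \<phi> s \<le> \<phi> z}"
  have cS: "closed S" unfolding S_def
    by (intro closed_Int K(1) closed_Collect_le cont continuous_on_const)
  define R where "R = (\<bar>C\<bar> + \<bar>\<phi> z - c\<bar>) / \<mu> + 1"
  have bnd: "norm s \<le> R" if "s \<in> S" for s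
  proof (rule ccontr)
    assume "\<not> norm s \<le> R"
    hence nR: "norm s > R" by simp
    have R1: "R \<ge> 1" unfolding R_def using mu by simp
    have "\<mu> * norm s > \<mu> * R" using nR mu by simp
    also have "\<mu> * R = \<bar>C\<bar> + \<bar>\<phi> z - c\<bar> + \<mu>" unfolding R_def using mu by (simp add: field_simps)
    finally have m: "\<mu> * norm s > \<bar>C\<bar> + \<bar>\<phi> z - c\<bar>" using mu by simp
    have n0: "norm s > 0" using nR R1 by linarith
    have "norm s * (\<mu> * norm s) > norm s * (\<bar>C\<bar> + \<bar>\<phi> z - c\<bar>)"
      using m n0 by (intro mult_strict_left_mono) auto
    moreover have "norm s * \<bar>C\<bar> \<ge> C * norm s" by (metis abs_ge_self mult.commute mult_right_mono norm_ge_zero)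
    moreover have "norm s * \<bar>\<phi> z - c\<bar> \<ge> \<bar>\<phi> z - c\<bar>" using nR R1
      using mult_right_mono[of 1 "norm s" "\<bar>\<phi> z - c\<bar>"] nR R1 by simp
    moreover have "norm s * (\<mu> * norm s) = \<mu> * (norm s)^2" by (simp add: power2_eq_square)
    moreover have "norm s * (\<bar>C\<bar> + \<bar>\<phi> z - c\<bar>) = norm s * \<bar>C\<bar> + norm s * \<bar>\<phi> z - c\<bar>" by (simp add: distrib_left)
    ultimately have "c - C * norm s + \<mu> * (norm s)^2 > \<phi> z"
      by (smt (verit))
    moreover have "\<phi> s \<le> \<phi> z" using that unfolding S_def by auto
    ultimately show False using lb[of s] by linarith
  qed
  have "bounded S" unfolding bounded_iff using bnd by blast
  hence cpt: "compact S" using cS by (simp add: compact_eq_bounded_closed)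
  have "z \<in> S" unfolding S_def using K by auto
  hence "S \<noteq> {}" by auto
  from continuous_attains_inf[OF cpt this continuous_on_subset[OF cont]]
  obtain m where m: "m \<in> S" "\<forall>y\<in>S. \<phi> m \<le> \<phi> y" by auto
  have ex: "\<exists>s. s \<in> K \<and> (\<forall>t\<in>K. \<phi> s \<le> \<phi> t)"
  proof (intro exI[of _ m] conjI ballI)
    show "m \<in> K" using m unfolding S_def by auto
    fix t assume "t \<in> K"
    show "\<phi> m \<le> \<phi> t"
    proof (cases "t \<in> S")
      case True thus ?thesis using m by auto
    next
      case False
      hence "\<phi> t > \<phi> z" using \<open>t \<in> K\<close> unfolding S_def by auto
      moreover have "\<phi> m \<le> \<phi> z" using m \<open>z \<in> S\<close> by auto
      ultimately show ?thesis by simp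
    qed
  qed
  show ?thesis unfolding argmin_on_def by (rule someI_ex[OF ex])
qed

lemma sep_lower:
  fixes hc :: "'n::finite \<Rightarrow> real \<Rightarrow> real"
  assumes cv: "\<forall>c. convex_on UNIV (hc c)"
  shows "\<exists>c0 C. C \<ge> 0 \<and> (\<forall>s. (\<Sum>c\<in>UNIV. hc c ((x + s) $ c)) \<ge> c0 - C * norm s)"
proof -
  have "\<forall>c. \<exists>K\<ge>0. \<forall>y. hc c y \<ge> - K - K * \<bar>y\<bar>" using convex_real_lower cv by blast
  then obtain K where K: "\<And>c. K c \<ge> 0" "\<And>c y. hc c y \<ge> - K c - K c * \<bar>y\<bar>" by metis
  have "(\<Sum>c\<in>UNIV. hc c ((x + s) $ c)) \<ge> (\<Sum>c\<in>UNIV. - K c - K c * \<bar>x $ c\<bar>) - (\<Sum>c\<in>UNIV. K c) * norm s" for s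
  proof -
    have "hc c ((x + s) $ c) \<ge> - K c - K c * \<bar>x $ c\<bar> - K c * norm s" for c
    proof -
      have "\<bar>(x + s) $ c\<bar> \<le> \<bar>x $ c\<bar> + norm s" using component_le_norm_cart[of s c] by simp
      hence "K c * \<bar>(x + s) $ c\<bar> \<le> K c * (\<bar>x $ c\<bar> + norm s)" using K(1) by (intro mult_left_mono) auto
      thus ?thesis using K(2)[of c "(x + s) $ c"] by (simp add: algebra_simps)
    qed
    hence "(\<Sum>c\<in>UNIV. hc c ((x + s) $ c)) \<ge> (\<Sum>c\<in>UNIV. - K c - K c * \<bar>x $ c\<bar> - K c * norm s)"
      by (intro sum_mono) auto
    thus ?thesis by (simp add: sum_subtractf sum_distrib_right)
  qed
  thus ?thesis using K(1) by (intro exI[of _ "\<Sum>c\<in>UNIV. - K c - K c * \<bar>x $ c\<bar>"] exI[of _ "\<Sum>c\<in>UNIV. K c"]) (auto intro: sum_nonneg)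
qed

lemma sep_cont:
  fixes hc :: "'n::finite \<Rightarrow> real \<Rightarrow> real"
  assumes cv: "\<forall>c. convex_on UNIV (hc c)"
  shows "continuous_on UNIV (\<lambda>s. (\<Sum>c\<in>UNIV. hc c ((x + s) $ c)))"
proof -
  have hcc: "continuous_on UNIV (hc c)" for c using convex_on_continuous[OF open_UNIV] cv by blast
  have "continuous_on UNIV (\<lambda>s. hc c ((x + s) $ c))" for c
    by (rule continuous_on_compose2[OF hcc[of c]]) (auto intro!: continuous_intros)
  thus ?thesis by (intro continuous_on_sum) auto
qed



lemma block_supp_scale: "s \<in> block_supp blk P \<Longrightarrow> t *\<^sub>R s \<in> block_supp blk P"
  by (simp add: block_supp_def)

lemma inner_restrict: "s \<in> block_supp blk P \<Longrightarrow> v \<bullet> s = block_restrict blk P v \<bullet> s"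
  unfolding inner_vec_def block_restrict_def block_supp_def
  by (intro sum.cong) auto

lemma descent:
  fixes f :: "real ^ 'n::finite \<Rightarrow> real" and grad :: "real ^ 'n \<Rightarrow> real ^ 'n"
  assumes grad: "\<forall>x. (f has_derivative (\<lambda>v. grad x \<bullet> v)) (at x)"
    and lip: "\<forall>x. \<forall>s \<in> block_supp blk P. norm (block_restrict blk P (grad (x + s) - grad x)) \<le> Lc * norm s"
    and s: "s \<in> block_supp blk P"
  shows "f (x + s) \<le> f x + grad x \<bullet> s + Lc / 2 * (norm s)^2"
proof -
  define w where "w t = f (x + t *\<^sub>R s) - t * (grad x \<bullet> s) - Lc / 2 * t^2 * (norm s)^2" for t
  have dw: "DERIV w t :> (grad (x + t *\<^sub>R s) \<bullet> s - grad x \<bullet> s - Lc * t * (norm s)^2)" for t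
  proof -
    have d1: "((\<lambda>t. x + t *\<^sub>R s) has_derivative (\<lambda>h. h *\<^sub>R s)) (at t)"
      by (auto intro!: derivative_eq_intros)
    have "((\<lambda>t. f (x + t *\<^sub>R s)) has_derivative (\<lambda>h. grad (x + t *\<^sub>R s) \<bullet> (h *\<^sub>R s))) (at t)"
      using has_derivative_compose[OF d1 grad[rule_format, of "x + t *\<^sub>R s"]] by simp
    then have "DERIV (\<lambda>t. f (x + t *\<^sub>R s)) t :> grad (x + t *\<^sub>R s) \<bullet> s"
      unfolding has_field_derivative_def
    proof -
      assume a: "((\<lambda>t. f (x + t *\<^sub>R s)) has_derivative (\<lambda>h. grad (x + t *\<^sub>R s) \<bullet> (h *\<^sub>R s))) (at t)"
      have "(\<lambda>h. grad (x + t *\<^sub>R s) \<bullet> (h *\<^sub>R s)) = (*) (grad (x + t *\<^sub>R s) \<bullet> s)"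
        by (rule ext) simp
      with a show "((\<lambda>t. f (x + t *\<^sub>R s)) has_derivative (*) (grad (x + t *\<^sub>R s) \<bullet> s)) (at t)" by simp
    qed
    then show ?thesis unfolding w_def
      by (auto intro!: derivative_eq_intros)
  qed
  have "w 1 \<le> w 0"
  proof (rule DERIV_nonpos_imp_nonincreasing[of 0 1 w])
    fix t :: real assume t: "0 \<le> t" "t \<le> 1"
    have ts: "t *\<^sub>R s \<in> block_supp blk P" using block_supp_scale[OF s] .
    have "(grad (x + t *\<^sub>R s) - grad x) \<bullet> s = block_restrict blk P (grad (x + t *\<^sub>R s) - grad x) \<bullet> s"
      using inner_restrict[OF s] .
    also have "\<dots> \<le> norm (block_restrict blk P (grad (x + t *\<^sub>R s) - grad x)) * norm s"
      by (rule norm_cauchy_schwarz)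
    also have "\<dots> \<le> (Lc * norm (t *\<^sub>R s)) * norm s"
      using lip[rule_format, OF ts, of x] by (intro mult_right_mono) auto
    also have "\<dots> = Lc * t * (norm s)^2" using t by (simp add: power2_eq_square)
    finally have "grad (x + t *\<^sub>R s) \<bullet> s - grad x \<bullet> s - Lc * t * (norm s)^2 \<le> 0"
      by (simp add: inner_diff_left)
    thus "\<exists>y. DERIV w t :> y \<and> y \<le> 0" using dw by blast
  qed simp
  thus ?thesis unfolding w_def by simp
qed



locale rcd =
  fixes N :: nat and blk :: "'n::finite \<Rightarrow> nat"
    and f :: "real ^ 'n \<Rightarrow> real" and grad :: "real ^ 'n \<Rightarrow> real ^ 'n"
    and h :: "real ^ 'n \<Rightarrow> real" and hc :: "'n \<Rightarrow> real \<Rightarrow> real"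
    and L :: "nat \<Rightarrow> nat \<Rightarrow> real" and a :: "real ^ 'n"
  assumes N2: "N \<ge> 2"
    and blk_range: "\<forall>c. blk c < N"
    and grad: "\<forall>x. (f has_derivative (\<lambda>v. grad x \<bullet> v)) (at x)"
    and L_pos: "\<forall>i<N. \<forall>j<N. L i j > 0"
    and L_sym: "\<forall>i<N. \<forall>j<N. L i j = L j i"
    and L_lip: "\<forall>i<N. \<forall>j<N. \<forall>x. \<forall>s \<in> block_supp blk {i, j}.
        norm (block_restrict blk {i, j} (grad (x + s) - grad x)) \<le> L i j * norm s"
    and h_sep: "\<forall>x. h x = (\<Sum>c\<in>UNIV. hc c (x $ c))"
    and hc_convex: "\<forall>c. convex_on UNIV (hc c)"
begin

definition "Lam i = real N * Gam N L i"

lemma Lam_eq: "i < N \<Longrightarrow> Lam i = (\<Sum>j<N. L i j)"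
  using N2 by (simp add: Lam_def Gam_def)

lemma Lam_pos: "i < N \<Longrightarrow> Lam i > 0"
  using L_pos N2 by (auto simp: Lam_eq intro!: sum_pos)

lemma Gam_pos: "i < N \<Longrightarrow> Gam N L i > 0"
  using Lam_pos[of i] N2 by (simp add: Lam_def zero_less_mult_iff)

lemma wnorm_sq: "(wnorm blk Lam s)^2 = (\<Sum>c\<in>UNIV. Lam (blk c) * (s $ c)^2)"
proof -
  have "0 \<le> Lam (blk c)" for c using Lam_pos blk_range less_imp_le by blast
  thus ?thesis unfolding wnorm_def by (intro real_sqrt_pow2 sum_nonneg) auto
qed

lemma norm_sq_vec: "(norm (s :: real ^ 'n))^2 = (\<Sum>c\<in>UNIV. (s $ c)^2)"
  unfolding power2_norm_eq_inner inner_vec_def by (simp add: power2_eq_square)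

lemma h_lower: "\<exists>c0 C. C \<ge> 0 \<and> (\<forall>s. h (x + s) \<ge> c0 - C * norm s)"
  using sep_lower[OF hc_convex, of x] h_sep by simp

lemma h_cont: "continuous_on UNIV (\<lambda>s. h (x + s))"
  using sep_cont[OF hc_convex, of x] h_sep by simp

lemma closed_block_supp: "closed (block_supp blk P)"
proof -
  have "block_supp blk P = (\<Inter>c\<in>{c. blk c \<notin> P}. {s. s $ c = 0})"
    by (auto simp: block_supp_def)
  thus ?thesis by (auto intro!: closed_INT closed_Collect_eq continuous_intros)
qed

definition "Phi x s = f x + grad x \<bullet> s + (1/2) * (wnorm blk Lam s)^2 + h (x + s)"
definition "Psi x i j s = f x + grad x \<bullet> s + (L i j / 2) * (norm s)^2 + h (x + s)"

definition "dd x = dLam blk Lam a f grad h x"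

lemma dd_props: "a \<bullet> dd x = 0 \<and> (\<forall>t. a \<bullet> t = 0 \<longrightarrow> Phi x (dd x) \<le> Phi x t)"
proof -
  obtain c0 C where C: "C \<ge> 0" "\<And>s. h (x + s) \<ge> c0 - C * norm s" using h_lower by blast
  define lm where "lm = Min ((\<lambda>c. Lam (blk c)) ` UNIV)"
  have lm_pos: "lm > 0" unfolding lm_def using Lam_pos blk_range by (subst Min_gr_iff) auto
  have lm_le: "lm \<le> Lam (blk c)" for c unfolding lm_def by (intro Min_le) auto
  have wq: "(wnorm blk Lam s)^2 \<ge> lm * (norm s)^2" for s
  proof -
    have "lm * (norm s)^2 = (\<Sum>c\<in>UNIV. lm * (s $ c)^2)" by (simp add: norm_sq_vec sum_distrib_left)
    also have "\<dots> \<le> (\<Sum>c\<in>UNIV. Lam (blk c) * (s $ c)^2)"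
      by (intro sum_mono mult_right_mono lm_le) auto
    finally show ?thesis by (simp add: wnorm_sq)
  qed
  have lb: "Phi x s \<ge> (f x + c0) - (norm (grad x) + C) * norm s + (lm/2) * (norm s)^2" for s
  proof -
    have "- (grad x \<bullet> s) \<le> norm (grad x) * norm s"
      using norm_cauchy_schwarz[of "- grad x" s] by simp
    thus ?thesis unfolding Phi_def using wq[of s] C(2)[of s] by (simp add: algebra_simps)
  qed
  have cont: "continuous_on UNIV (Phi x)"
    unfolding Phi_def wnorm_def
    by (intro continuous_intros h_cont[unfolded comp_def])
  have "closed {s. a \<bullet> s = 0}" by (rule closed_hyperplane)
  from argmin_props[OF this _ cont _ lb, of 0] lm_pos
  show ?thesis unfolding dd_def dLam_def Phi_def[abs_def] Lam_def[abs_def] by simp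
qed

definition "pd x p = pair_dir blk L a f grad h x p"

lemma pd_props:
  assumes "i < N" "j < N"
  shows "pd x (i, j) \<in> block_supp blk {i, j} \<and> a \<bullet> pd x (i, j) = 0 \<and>
     (\<forall>t\<in>block_supp blk {i, j}. a \<bullet> t = 0 \<longrightarrow> Psi x i j (pd x (i, j)) \<le> Psi x i j t)"
proof -
  obtain c0 C where C: "C \<ge> 0" "\<And>s. h (x + s) \<ge> c0 - C * norm s" using h_lower by blast
  have Lp: "L i j > 0" using L_pos assms by auto
  have lb: "Psi x i j s \<ge> (f x + c0) - (norm (grad x) + C) * norm s + (L i j/2) * (norm s)^2" for s
  proof -
    have "- (grad x \<bullet> s) \<le> norm (grad x) * norm s"
      using norm_cauchy_schwarz[of "- grad x" s] by simp
    thus ?thesis unfolding Psi_def using C(2)[of s] by (simp add: algebra_simps)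
  qed
  have cont: "continuous_on UNIV (Psi x i j)"
    unfolding Psi_def
    by (intro continuous_intros h_cont[unfolded comp_def])
  have cl: "closed (block_supp blk {i, j} \<inter> {s. a \<bullet> s = 0})"
    by (intro closed_Int closed_block_supp closed_hyperplane)
  have "0 \<in> block_supp blk {i, j} \<inter> {s. a \<bullet> s = 0}" by (simp add: block_supp_def)
  from argmin_props[OF cl this cont _ lb] Lp
  show ?thesis unfolding pd_def pair_dir_def Psi_def[abs_def] by simp
qed

end



lemma sc_real:
  fixes A B :: real
  assumes B: "B \<ge> 0" and H: "\<And>t. 0 < t \<Longrightarrow> t \<le> 1 \<Longrightarrow> A + B/2 \<le> (1-t)*A + (1-t)^2*B/2"
  shows "A \<le> -B"
proof (rule ccontr)
  assume "\<not> A \<le> -B"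
  hence AB: "A + B > 0" by simp
  have k: "A \<le> (t/2 - 1) * B" if "0 < t" "t \<le> 1" for t
  proof -
    have "t * A \<le> (t^2/2 - t) * B" using H[OF that] by (simp add: power2_eq_square algebra_simps)
    hence "t * A \<le> t * ((t/2 - 1) * B)" by (simp add: power2_eq_square algebra_simps)
    thus ?thesis using that by simp
  qed
  show False
  proof (cases "B = 0")
    case True thus ?thesis using k[of 1] AB by simp
  next
    case False
    hence Bp: "B > 0" using B by simp
    define t where "t = min 1 ((A + B) / B)"
    have t: "0 < t" "t \<le> 1" unfolding t_def using AB Bp by auto
    have "t * B \<le> A + B" unfolding t_def using Bp AB
      by (smt (verit, best) min.cobounded2 mult_right_mono nonzero_eq_divide_eq)
    with k[OF t] have "A \<le> -B + (A + B)/2" by (simp add: algebra_simps)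
    thus False using AB by simp
  qed
qed

context rcd begin

lemma hc_conv: "0 \<le> u \<Longrightarrow> u \<le> 1 \<Longrightarrow> hc c (y + u * e) \<le> (1 - u) * hc c y + u * hc c (y + e)"
  using convex_onD[OF hc_convex[rule_format, of c], of u y "y + e"] by (simp add: algebra_simps)

lemma h_conv: "0 \<le> u \<Longrightarrow> u \<le> 1 \<Longrightarrow> h (x + u *\<^sub>R s) \<le> (1 - u) * h x + u * h (x + s)"
proof -
  assume u: "0 \<le> u" "u \<le> 1"
  have "h (x + u *\<^sub>R s) = (\<Sum>c\<in>UNIV. hc c (x $ c + u * s $ c))" by (simp add: h_sep)
  also have "\<dots> \<le> (\<Sum>c\<in>UNIV. (1 - u) * hc c (x $ c) + u * hc c (x $ c + s $ c))"
    by (intro sum_mono hc_conv u)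
  also have "\<dots> = (1 - u) * h x + u * h (x + s)"
    by (simp add: h_sep sum.distrib sum_distrib_left)
  finally show ?thesis .
qed

definition "Aq x = grad x \<bullet> dd x + h (x + dd x) - h x"
definition "Bq x = (\<Sum>c\<in>UNIV. Lam (blk c) * (dd x $ c)^2)"

lemma Bq_nonneg: "Bq x \<ge> 0"
proof -
  have "0 \<le> Lam (blk c)" for c using Lam_pos blk_range less_imp_le by blast
  thus ?thesis unfolding Bq_def by (intro sum_nonneg) auto
qed

lemma Aq_Bq: "Aq x \<le> - Bq x"
proof (rule sc_real[OF Bq_nonneg])
  fix t :: real assume t: "0 < t" "t \<le> 1"
  let ?d = "dd x"
  have "a \<bullet> ((1 - t) *\<^sub>R ?d) = 0" using dd_props[of x] by simp
  hence "Phi x ?d \<le> Phi x ((1 - t) *\<^sub>R ?d)" using dd_props[of x] by blast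
  moreover have "Phi x ?d = f x + h x + (Aq x + Bq x / 2)"
    unfolding Phi_def Aq_def Bq_def wnorm_sq by simp
  moreover have "(wnorm blk Lam ((1 - t) *\<^sub>R ?d))^2 = (1-t)^2 * Bq x"
  proof -
    have "((1 - t) *\<^sub>R ?d) $ c = (1 - t) * ?d $ c" for c by simp
    hence "(wnorm blk Lam ((1 - t) *\<^sub>R ?d))^2 = (\<Sum>c\<in>UNIV. (1-t)^2 * (Lam (blk c) * (?d $ c)^2))"
      unfolding wnorm_sq by (simp only: power_mult_distrib) (simp add: algebra_simps)
    thus ?thesis unfolding Bq_def by (simp add: sum_distrib_left)
  qed
  moreover have "h (x + (1 - t) *\<^sub>R ?d) \<le> t * h x + (1 - t) * h (x + ?d)"
    using h_conv[of "1 - t" x ?d] t by simp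
  ultimately have "f x + h x + (Aq x + Bq x / 2) \<le> f x + (1 - t) * (grad x \<bullet> ?d) + (1/2) * ((1-t)^2 * Bq x) + (t * h x + (1 - t) * h (x + ?d))"
    unfolding Phi_def by (simp add: algebra_simps)
  thus "Aq x + Bq x / 2 \<le> (1 - t) * Aq x + (1 - t)^2 * Bq x / 2"
    unfolding Aq_def by (simp add: algebra_simps)
qed

end



context rcd begin

definition "rr x i = (\<Sum>c\<in>{c. blk c = i}. a $ c * dd x $ c)"
definition "Rp x = (\<Sum>i<N. max (rr x i) 0)"
definition "th x i j = (if rr x i = 0 then 1 / real (N - 1)
   else if rr x i * rr x j < 0 then \<bar>rr x j\<bar> / Rp x else 0)"

lemma sum_blocks: "(\<Sum>c\<in>UNIV. F c) = (\<Sum>i<N. \<Sum>c\<in>{c. blk c = i}. F c)"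
proof -
  have "(\<Sum>i<N. \<Sum>c\<in>{c \<in> UNIV. blk c = i}. F c) = (\<Sum>c\<in>UNIV. F c)"
    using blk_range by (intro sum.group) auto
  thus ?thesis by simp
qed

lemma rr_sum: "(\<Sum>i<N. rr x i) = 0"
proof -
  have "(\<Sum>i<N. rr x i) = (\<Sum>c\<in>UNIV. a $ c * dd x $ c)"
    unfolding rr_def by (rule sum_blocks[symmetric])
  also have "\<dots> = a \<bullet> dd x" by (simp add: inner_vec_def)
  finally show ?thesis using dd_props by simp
qed

lemma Rn: "(\<Sum>i<N. max (- rr x i) 0) = Rp x"
proof -
  have "rr x i = max (rr x i) 0 - max (- rr x i) 0" for i by simp
  hence "(\<Sum>i<N. rr x i) = (\<Sum>i<N. max (rr x i) 0) - (\<Sum>i<N. max (- rr x i) 0)"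
    by (simp add: sum_subtractf[symmetric])
  thus ?thesis using rr_sum unfolding Rp_def by simp
qed

lemma Rp_nonneg: "Rp x \<ge> 0" unfolding Rp_def by (intro sum_nonneg) auto

lemma abs_rr_le: "j < N \<Longrightarrow> \<bar>rr x j\<bar> \<le> Rp x"
proof -
  assume j: "j < N"
  have 1: "max (rr x j) 0 \<le> Rp x" unfolding Rp_def
    using j by (intro member_le_sum) auto
  have 2: "max (- rr x j) 0 \<le> Rp x" unfolding Rn[symmetric]
    using j by (intro member_le_sum) auto
  show ?thesis using 1 2 by linarith
qed

lemma th_bounds: "j < N \<Longrightarrow> 0 \<le> th x i j \<and> th x i j \<le> 1"
  using abs_rr_le[of j x] Rp_nonneg[of x] N2
  by (auto simp: th_def divide_le_eq_1)

lemma th_cancel: "th x i j * rr x i + th x j i * rr x j = 0"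
proof -
  consider "rr x i = 0" | "rr x j = 0" | "rr x i * rr x j < 0" | "rr x i * rr x j > 0"
    by (metis linorder_neqE_linordered_idom mult_eq_0_iff)
  thus ?thesis
  proof cases
    case 3
    hence "rr x i \<noteq> 0" "rr x j \<noteq> 0" by auto
    moreover have "rr x j * rr x i < 0" using 3 by (simp add: mult.commute)
    moreover have "\<bar>rr x j\<bar> * rr x i + \<bar>rr x i\<bar> * rr x j = 0"
      using 3 by (cases "rr x i > 0") (auto simp: mult_less_0_iff)
    ultimately show ?thesis using 3 unfolding th_def by (simp add: add_divide_distrib[symmetric])
  next
    case 4
    hence "rr x j * rr x i > 0" by (simp add: mult.commute)
    thus ?thesis using 4 unfolding th_def by auto
  qed (auto simp: th_def)
qed

lemma th_sum: assumes i: "i < N" shows "(\<Sum>j\<in>{..<N} - {i}. th x i j) = 1"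
proof -
  have fin: "finite ({..<N} - {i})" by simp
  consider "rr x i = 0" | "rr x i > 0" | "rr x i < 0" by linarith
  thus ?thesis
  proof cases
    case 1
    have "card ({..<N} - {i}) = N - 1" using i by simp
    thus ?thesis using 1 N2 unfolding th_def by simp
  next
    case 2
    have Rp: "Rp x > 0" using 2 member_le_sum[of i "{..<N}" "\<lambda>i. max (rr x i) 0"] i unfolding Rp_def by auto
    have eq: "th x i j = max (- rr x j) 0 / Rp x" if "j \<noteq> i" for j
      using 2 unfolding th_def by (auto simp: mult_less_0_iff)
    have "(\<Sum>j\<in>{..<N} - {i}. th x i j) = (\<Sum>j\<in>{..<N} - {i}. max (- rr x j) 0 / Rp x)"
      using eq by (intro sum.cong) auto
    also have "\<dots> = (\<Sum>j<N. max (- rr x j) 0 / Rp x)"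
      using i 2 by (subst (2) sum.remove[of _ i]) auto
    also have "\<dots> = 1" using Rp by (simp add: sum_divide_distrib[symmetric] Rn)
    finally show ?thesis .
  next
    case 3
    have Rp: "Rp x > 0" using 3 member_le_sum[of i "{..<N}" "\<lambda>i. max (- rr x i) 0"] i unfolding Rn[symmetric] by auto
    have eq: "th x i j = max (rr x j) 0 / Rp x" if "j \<noteq> i" for j
      using 3 unfolding th_def by (auto simp: mult_less_0_iff)
    have "(\<Sum>j\<in>{..<N} - {i}. th x i j) = (\<Sum>j\<in>{..<N} - {i}. max (rr x j) 0 / Rp x)"
      using eq by (intro sum.cong) auto
    also have "\<dots> = (\<Sum>j<N. max (rr x j) 0 / Rp x)"
      using i 3 by (subst (2) sum.remove[of _ i]) auto
    also have "\<dots> = 1" using Rp by (simp add: sum_divide_distrib[symmetric] Rp_def)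
    finally show ?thesis .
  qed
qed

end



context rcd begin

definition "kap x i j c = (if blk c = i then th x i j else if blk c = j then th x j i else 0)"
definition "sv x i j = (\<chi> c. kap x i j c * dd x $ c)"
definition "Wt x i j c = grad x $ c * dd x $ c + L i j / 2 * (dd x $ c)^2
   + (hc c (x $ c + dd x $ c) - hc c (x $ c))"

lemma kap_bounds: "i < N \<Longrightarrow> j < N \<Longrightarrow> 0 \<le> kap x i j c \<and> kap x i j c \<le> 1"
  unfolding kap_def using th_bounds by auto

lemma sv_supp: "sv x i j \<in> block_supp blk {i, j}"
  unfolding block_supp_def sv_def kap_def by auto

lemma sv_feas: assumes "i \<noteq> j" shows "a \<bullet> sv x i j = 0"
proof -
  have "a \<bullet> sv x i j = (\<Sum>c\<in>UNIV. a $ c * (kap x i j c * dd x $ c))"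
    by (simp add: inner_vec_def sv_def)
  also have "\<dots> = (\<Sum>c\<in>UNIV. (if blk c = i then th x i j * (a $ c * dd x $ c) else 0)
                 + (if blk c = j then th x j i * (a $ c * dd x $ c) else 0))"
    using assms by (intro sum.cong) (auto simp: kap_def)
  also have "\<dots> = th x i j * rr x i + th x j i * rr x j"
    unfolding sum.distrib rr_def
    by (simp add: sum.inter_filter[symmetric] sum_distrib_left)
  also have "\<dots> = 0" by (rule th_cancel)
  finally show ?thesis .
qed

lemma percoord:
  fixes k g d Lc :: real
  assumes k: "0 \<le> k" "k \<le> 1" and Lc: "Lc \<ge> 0"
  shows "g * (k * d) + Lc / 2 * (k * d)^2 + (hc c (y + k * d) - hc c y)
     \<le> k * (g * d + Lc / 2 * d^2 + (hc c (y + d) - hc c y))"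
proof -
  have "k^2 \<le> k" using k by (simp add: power2_eq_square mult_left_le_one_le)
  hence "Lc / 2 * d^2 * k^2 \<le> Lc / 2 * d^2 * k" using Lc by (intro mult_left_mono) auto
  moreover have "hc c (y + k * d) \<le> (1 - k) * hc c y + k * hc c (y + d)" using hc_conv k by blast
  ultimately show ?thesis by (simp add: algebra_simps power_mult_distrib)
qed

lemma sv_Psi: assumes "i < N" "j < N"
  shows "Psi x i j (sv x i j) \<le> f x + h x + (\<Sum>c\<in>UNIV. kap x i j c * Wt x i j c)"
proof -
  have Lc: "L i j \<ge> 0" using L_pos assms by (auto intro: less_imp_le)
  have "Psi x i j (sv x i j) = f x + h x + (\<Sum>c\<in>UNIV. grad x $ c * (kap x i j c * dd x $ c)
      + L i j / 2 * (kap x i j c * dd x $ c)^2 + (hc c (x $ c + kap x i j c * dd x $ c) - hc c (x $ c)))"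
    unfolding Psi_def norm_sq_vec
    by (simp add: h_sep inner_vec_def sv_def sum.distrib sum_distrib_left sum_subtractf algebra_simps)
  also have "\<dots> \<le> f x + h x + (\<Sum>c\<in>UNIV. kap x i j c * Wt x i j c)"
    unfolding Wt_def using kap_bounds[OF assms] Lc
    by (intro add_left_mono sum_mono percoord) auto
  finally show ?thesis .
qed

lemma V_le: assumes "i < N" "j < N" "i \<noteq> j"
  shows "f (x + pd x (i, j)) + h (x + pd x (i, j)) \<le> f x + h x + (\<Sum>c\<in>UNIV. kap x i j c * Wt x i j c)"
proof -
  have P: "pd x (i, j) \<in> block_supp blk {i, j}" using pd_props[OF assms(1,2)] by blast
  have "f (x + pd x (i, j)) \<le> f x + grad x \<bullet> pd x (i, j) + L i j / 2 * (norm (pd x (i, j)))^2"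
    using descent[OF grad _ P] L_lip assms by blast
  hence "f (x + pd x (i, j)) + h (x + pd x (i, j)) \<le> Psi x i j (pd x (i, j))"
    unfolding Psi_def by simp
  also have "\<dots> \<le> Psi x i j (sv x i j)"
    using pd_props[OF assms(1,2)] sv_supp sv_feas[OF assms(3)] by blast
  also have "\<dots> \<le> f x + h x + (\<Sum>c\<in>UNIV. kap x i j c * Wt x i j c)" by (rule sv_Psi[OF assms(1,2)])
  finally show ?thesis .
qed

end



context rcd begin

definition "Off = Sigma {..<N} (\<lambda>i. {..<N} - {i})"

lemma Off_finite: "finite Off" unfolding Off_def by auto

lemma Off_swap: "prod.swap ` Off = Off"
  unfolding Off_def by (auto simp: image_iff)

lemma sum_Off_swap: "(\<Sum>p\<in>Off. u (prod.swap p)) = (\<Sum>p\<in>Off. u p)"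
proof -
  have "(\<Sum>p\<in>prod.swap ` Off. u p) = (\<Sum>p\<in>Off. (u \<circ> prod.swap) p)"
    by (rule sum.reindex) (auto intro: inj_onI)
  thus ?thesis using Off_swap by simp
qed

lemma Wt_sym: "i < N \<Longrightarrow> j < N \<Longrightarrow> Wt x i j c = Wt x j i c"
  unfolding Wt_def using L_sym by simp

lemma per_c_sum:
  "(\<Sum>p\<in>Off. kap x (fst p) (snd p) c * Wt x (fst p) (snd p) c)
     \<le> 2 * (grad x $ c * dd x $ c + (hc c (x $ c + dd x $ c) - hc c (x $ c))
            + Lam (blk c) / 2 * (dd x $ c)^2)"
proof -
  define m where "m = blk c"
  have m: "m < N" unfolding m_def using blk_range by simp
  define u where "u p = (if blk c = fst p then th x (fst p) (snd p) * Wt x (fst p) (snd p) c else 0)" for p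
  have 1: "kap x (fst p) (snd p) c * Wt x (fst p) (snd p) c = u p + u (prod.swap p)" if "p \<in> Off" for p
    using that Wt_sym unfolding Off_def u_def kap_def by (cases p) auto
  have "(\<Sum>p\<in>Off. kap x (fst p) (snd p) c * Wt x (fst p) (snd p) c) = (\<Sum>p\<in>Off. u p) + (\<Sum>p\<in>Off. u (prod.swap p))"
    using 1 by (simp add: sum.distrib)
  also have "\<dots> = 2 * (\<Sum>p\<in>Off. u p)" by (simp add: sum_Off_swap)
  also have "(\<Sum>p\<in>Off. u p) = (\<Sum>i<N. \<Sum>j\<in>{..<N} - {i}. u (i, j))"
    unfolding Off_def by (subst sum.Sigma) auto
  also have "\<dots> = (\<Sum>i<N. if m = i then (\<Sum>j\<in>{..<N} - {i}. th x i j * Wt x i j c) else 0)"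
    unfolding u_def m_def by (intro sum.cong) auto
  also have "\<dots> = (\<Sum>j\<in>{..<N} - {m}. th x m j * Wt x m j c)"
    using m by (simp add: sum.delta)
  also have "\<dots> = (grad x $ c * dd x $ c + (hc c (x $ c + dd x $ c) - hc c (x $ c))) * (\<Sum>j\<in>{..<N} - {m}. th x m j)
        + (dd x $ c)^2 / 2 * (\<Sum>j\<in>{..<N} - {m}. th x m j * L m j)"
  proof -
    have "th x m j * Wt x m j c = (grad x $ c * dd x $ c + (hc c (x $ c + dd x $ c) - hc c (x $ c))) * th x m j
        + (dd x $ c)^2 / 2 * (th x m j * L m j)" for j
      unfolding Wt_def by (simp add: algebra_simps)
    thus ?thesis by (simp add: sum.distrib sum_distrib_left)
  qed
  also have "(\<Sum>j\<in>{..<N} - {m}. th x m j) = 1" by (rule th_sum[OF m])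
  also have "(\<Sum>j\<in>{..<N} - {m}. th x m j * L m j) \<le> Lam m"
  proof -
    have "(\<Sum>j\<in>{..<N} - {m}. th x m j * L m j) \<le> (\<Sum>j\<in>{..<N} - {m}. L m j)"
      using th_bounds L_pos m by (intro sum_mono) (auto intro!: mult_left_le_one_le less_imp_le)
    also have "\<dots> \<le> (\<Sum>j<N. L m j)"
      using L_pos m by (intro sum_mono2) (auto intro: less_imp_le)
    finally show ?thesis using Lam_eq[OF m] by simp
  qed
  hence "(dd x $ c)^2 / 2 * (\<Sum>j\<in>{..<N} - {m}. th x m j * L m j) \<le> (dd x $ c)^2 / 2 * Lam m"
    by (intro mult_left_mono) auto
  ultimately show ?thesis unfolding m_def by (simp add: algebra_simps)
qed

lemma total_sum:
  "(\<Sum>p\<in>Off. \<Sum>c\<in>UNIV. kap x (fst p) (snd p) c * Wt x (fst p) (snd p) c) \<le> 2 * (Aq x + Bq x / 2)"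
proof -
  have "(\<Sum>p\<in>Off. \<Sum>c\<in>UNIV. kap x (fst p) (snd p) c * Wt x (fst p) (snd p) c)
      = (\<Sum>c\<in>UNIV. \<Sum>p\<in>Off. kap x (fst p) (snd p) c * Wt x (fst p) (snd p) c)"
    by (rule sum.swap)
  also have "\<dots> \<le> (\<Sum>c\<in>UNIV. 2 * (grad x $ c * dd x $ c + (hc c (x $ c + dd x $ c) - hc c (x $ c))
            + Lam (blk c) / 2 * (dd x $ c)^2))"
    by (intro sum_mono per_c_sum)
  also have "\<dots> = 2 * (Aq x + Bq x / 2)"
    unfolding Aq_def Bq_def
    by (simp add: sum_distrib_left sum.distrib sum_subtractf h_sep inner_vec_def sum_divide_distrib algebra_simps)
  finally show ?thesis .
qed

end



context rcd begin

definition "Pset = {(i, j). i < j \<and> j < N}"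

lemma Pset_finite: "finite Pset"
  by (rule finite_subset[of _ "{..<N} \<times> {..<N}"]) (auto simp: Pset_def)

lemma Pset_ne: "Pset \<noteq> {}"
proof -
  have "(0, 1) \<in> Pset" using N2 by (simp add: Pset_def)
  thus ?thesis by blast
qed

lemma Off_split: "Off = Pset \<union> prod.swap ` Pset" and Pset_disj: "Pset \<inter> prod.swap ` Pset = {}"
  unfolding Off_def Pset_def by (auto simp: image_iff)

lemma sum_Off_Pset: "(\<Sum>p\<in>Off. u p) = (\<Sum>p\<in>Pset. u p + u (prod.swap p))"
proof -
  have fin2: "finite (prod.swap ` Pset)" using Pset_finite by simp
  have "(\<Sum>p\<in>Off. u p) = (\<Sum>p\<in>Pset. u p) + (\<Sum>p\<in>prod.swap ` Pset. u p)"
    unfolding Off_split by (rule sum.union_disjoint[OF Pset_finite fin2 Pset_disj])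
  also have "(\<Sum>p\<in>prod.swap ` Pset. u p) = (\<Sum>p\<in>Pset. u (prod.swap p))"
    by (subst sum.reindex) (auto intro: inj_onI)
  finally show ?thesis by (simp add: sum.distrib)
qed

lemma card_Pset: "2 * card Pset \<le> N * N"
proof -
  have "card Off = card Pset + card (prod.swap ` Pset)"
    unfolding Off_split using Pset_finite Pset_disj by (simp add: card_Un_disjoint)
  also have "card (prod.swap ` Pset) = card Pset" by (rule card_image) (auto intro: inj_onI)
  finally have "card Off = 2 * card Pset" by simp
  moreover have "card Off \<le> card ({..<N} \<times> {..<N})"
    by (rule card_mono) (auto simp: Off_def)
  ultimately show ?thesis by (simp add: card_cartesian_product)
qed

lemma pd_sym: "i < N \<Longrightarrow> j < N \<Longrightarrow> pd x (j, i) = pd x (i, j)"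
  unfolding pd_def pair_dir_def using L_sym by (simp add: insert_commute)

definition "Vf x p = f (x + pd x p) + h (x + pd x p)"

lemma M2_sq: "(M2 N blk L a f grad h x)^2 = Bq x / N"
proof -
  have LamE: "(\<lambda>i. real N * Gam N L i) = Lam" by (rule ext) (simp add: Lam_def)
  have gp: "Gam N L (blk c) > 0" for c using Gam_pos blk_range by blast
  have "(M2 N blk L a f grad h x)^2 = (\<Sum>c\<in>UNIV. (Gam N L (blk c) * dd x $ c)^2 / Gam N L (blk c))"
    unfolding M2_def wnorm_dual_def LamE dd_def[symmetric] Dmat_def
    using gp by (subst real_sqrt_pow2) (auto intro!: sum_nonneg divide_nonneg_pos)
  also have "\<dots> = (\<Sum>c\<in>UNIV. Gam N L (blk c) * (dd x $ c)^2)"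
    using gp by (intro sum.cong) (auto simp: power2_eq_square field_simps less_imp_neq[symmetric])
  also have "\<dots> = Bq x / N"
  proof -
    have "Bq x = real N * (\<Sum>c\<in>UNIV. Gam N L (blk c) * (dd x $ c)^2)"
      unfolding Bq_def Lam_def by (simp add: sum_distrib_left mult.assoc)
    thus ?thesis using N2 by simp
  qed
  finally show ?thesis .
qed

lemma one_step:
  "measure_pmf.expectation (pair_pmf N) (Vf x) \<le> f x + h x - (M2 N blk L a f grad h x)^2 / N"
proof -
  let ?F = "f x + h x"
  have K0: "card Pset > 0" using Pset_finite Pset_ne by (simp add: card_gt_0_iff)
  have E: "measure_pmf.expectation (pair_pmf N) (Vf x) = (\<Sum>p\<in>Pset. Vf x p) / card Pset"
    unfolding pair_pmf_def Pset_def[symmetric]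
    by (rule integral_pmf_of_set[OF Pset_ne Pset_finite])
  have sym: "Vf x (prod.swap p) = Vf x p" if "p \<in> Pset" for p
    using that pd_sym unfolding Vf_def Pset_def by (cases p) auto
  have "(\<Sum>p\<in>Off. Vf x p - ?F) = (\<Sum>p\<in>Pset. (Vf x p - ?F) + (Vf x (prod.swap p) - ?F))"
    by (rule sum_Off_Pset)
  also have "\<dots> = (\<Sum>p\<in>Pset. 2 * (Vf x p - ?F))" using sym by (intro sum.cong) auto
  finally have "2 * (\<Sum>p\<in>Pset. Vf x p - ?F) = (\<Sum>p\<in>Off. Vf x p - ?F)"
    by (simp add: sum_distrib_left)
  also have "\<dots> \<le> (\<Sum>p\<in>Off. \<Sum>c\<in>UNIV. kap x (fst p) (snd p) c * Wt x (fst p) (snd p) c)"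
  proof (rule sum_mono)
    fix p assume "p \<in> Off"
    then obtain i j where p: "p = (i, j)" "i < N" "j < N" "i \<noteq> j" unfolding Off_def by auto
    show "Vf x p - ?F \<le> (\<Sum>c\<in>UNIV. kap x (fst p) (snd p) c * Wt x (fst p) (snd p) c)"
      using V_le[OF p(2-4), of x] unfolding p Vf_def by simp
  qed
  also have "\<dots> \<le> 2 * (Aq x + Bq x / 2)" by (rule total_sum)
  finally have S: "(\<Sum>p\<in>Pset. Vf x p - ?F) \<le> - Bq x / 2" using Aq_Bq[of x] by simp
  have "(\<Sum>p\<in>Pset. Vf x p) / card Pset = ?F + (\<Sum>p\<in>Pset. Vf x p - ?F) / card Pset"
    using K0 by (simp add: sum_subtractf field_simps)
  also have "\<dots> \<le> ?F + (- Bq x / 2) / card Pset"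
    using S K0 by (intro add_left_mono divide_right_mono) auto
  also have "(- Bq x / 2) / card Pset \<le> - (Bq x / N) / N"
  proof -
    have "real (2 * card Pset) \<le> real (N * N)" using card_Pset by linarith
    hence c: "2 * real (card Pset) \<le> real N * real N" by simp
    have "Bq x / (real N * real N) \<le> Bq x / (2 * real (card Pset))"
      using Bq_nonneg[of x] K0 c by (intro divide_left_mono) auto
    thus ?thesis by (simp add: field_simps)
  qed
  finally show ?thesis using E M2_sq by simp
qed

lemma pd_feas: "p \<in> Pset \<Longrightarrow> a \<bullet> (x + pd x p) = a \<bullet> x"
  using pd_props unfolding Pset_def by (auto simp: inner_add_right)

end



lemma exp_bind:
  fixes g :: "'b \<Rightarrow> real"
  assumes A: "finite (set_pmf M)" and B: "\<And>x. x \<in> set_pmf M \<Longrightarrow> finite (set_pmf (Nf x))"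
  shows "measure_pmf.expectation (bind_pmf M Nf) g = measure_pmf.expectation M (\<lambda>x. measure_pmf.expectation (Nf x) g)"
proof -
  define Bs where "Bs = (\<Union>x\<in>set_pmf M. set_pmf (Nf x))"
  have fB: "finite Bs" unfolding Bs_def using A B by auto
  have L: "measure_pmf.expectation (bind_pmf M Nf) g = (\<Sum>y\<in>Bs. g y * pmf (bind_pmf M Nf) y)"
    by (rule integral_measure_pmf_real[OF fB]) (auto simp: Bs_def)
  have pb: "pmf (bind_pmf M Nf) y = (\<Sum>x\<in>set_pmf M. pmf (Nf x) y * pmf M x)" for y
    unfolding pmf_bind by (rule integral_measure_pmf_real[OF A]) auto
  have inner: "measure_pmf.expectation (Nf x) g = (\<Sum>y\<in>Bs. g y * pmf (Nf x) y)" if "x \<in> set_pmf M" for x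
    by (rule integral_measure_pmf_real[OF fB]) (use that in \<open>auto simp: Bs_def\<close>)
  have R: "measure_pmf.expectation M (\<lambda>x. measure_pmf.expectation (Nf x) g)
      = (\<Sum>x\<in>set_pmf M. measure_pmf.expectation (Nf x) g * pmf M x)"
    by (rule integral_measure_pmf_real[OF A]) auto
  also have "\<dots> = (\<Sum>x\<in>set_pmf M. (\<Sum>y\<in>Bs. g y * pmf (Nf x) y) * pmf M x)"
    using inner by (intro sum.cong) auto
  also have "\<dots> = (\<Sum>x\<in>set_pmf M. \<Sum>y\<in>Bs. g y * (pmf (Nf x) y * pmf M x))"
    by (simp add: sum_distrib_right mult.assoc)
  also have "\<dots> = (\<Sum>y\<in>Bs. \<Sum>x\<in>set_pmf M. g y * (pmf (Nf x) y * pmf M x))"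
    by (rule sum.swap)
  also have "\<dots> = (\<Sum>y\<in>Bs. g y * pmf (bind_pmf M Nf) y)"
    by (simp add: pb sum_distrib_left)
  finally show ?thesis using L by simp
qed

context rcd begin

lemma set_pair_pmf: "set_pmf (pair_pmf N) = Pset"
  unfolding pair_pmf_def Pset_def[symmetric] using Pset_finite Pset_ne by simp

lemma iter_props: "finite (set_pmf (rcd_iter N blk L a f grad h x0 k)) \<and>
    (\<forall>y\<in>set_pmf (rcd_iter N blk L a f grad h x0 k). a \<bullet> y = a \<bullet> x0)"
proof (induction k)
  case 0 thus ?case by simp
next
  case (Suc k)
  have "finite (set_pmf (pair_pmf N))" using set_pair_pmf Pset_finite by simp
  moreover have "a \<bullet> (y + pair_dir blk L a f grad h y p) = a \<bullet> y" if "p \<in> Pset" for y p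
    using pd_feas[OF that, of y] unfolding pd_def .
  ultimately show ?case using Suc by (auto simp: set_pair_pmf)
qed

lemma iter_step:
  "measure_pmf.expectation (rcd_iter N blk L a f grad h x0 (Suc k)) (\<lambda>y. f y + h y)
   \<le> measure_pmf.expectation (rcd_iter N blk L a f grad h x0 k) (\<lambda>y. f y + h y)
     - measure_pmf.expectation (rcd_iter N blk L a f grad h x0 k) (\<lambda>y. (M2 N blk L a f grad h y)^2) / N"
proof -
  let ?M = "rcd_iter N blk L a f grad h x0 k"
  have fM: "finite (set_pmf ?M)" using iter_props by blast
  have fP: "finite (set_pmf (pair_pmf N))" using set_pair_pmf Pset_finite by simp
  have "measure_pmf.expectation (rcd_iter N blk L a f grad h x0 (Suc k)) (\<lambda>y. f y + h y)
      = measure_pmf.expectation ?M (\<lambda>x. measure_pmf.expectation (pair_pmf N) (Vf x))"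
    by (simp add: exp_bind[OF fM] fP Vf_def[abs_def] pd_def[abs_def])
  also have "\<dots> \<le> measure_pmf.expectation ?M (\<lambda>x. (f x + h x) - (M2 N blk L a f grad h x)^2 / N)"
    by (intro integral_mono integrable_measure_pmf_finite[OF fM] one_step)
  also have "\<dots> = measure_pmf.expectation ?M (\<lambda>y. f y + h y)
     - measure_pmf.expectation ?M (\<lambda>y. (M2 N blk L a f grad h y)^2) / N"
  proof -
    have "measure_pmf.expectation ?M (\<lambda>x. (f x + h x) - (M2 N blk L a f grad h x)^2 / N)
      = measure_pmf.expectation ?M (\<lambda>y. f y + h y) - measure_pmf.expectation ?M (\<lambda>x. (M2 N blk L a f grad h x)^2 / N)"
      by (rule Bochner_Integration.integral_diff) (rule integrable_measure_pmf_finite[OF fM])+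
    also have "measure_pmf.expectation ?M (\<lambda>x. (M2 N blk L a f grad h x)^2 / N)
      = measure_pmf.expectation ?M (\<lambda>x. (M2 N blk L a f grad h x)^2) / N"
      by (rule integral_divide_zero)
    finally show ?thesis .
  qed
  finally show ?thesis .
qed

end



context rcd begin

lemma telescope:
  "(\<Sum>l\<le>k. measure_pmf.expectation (rcd_iter N blk L a f grad h x0 l) (\<lambda>y. (M2 N blk L a f grad h y)^2))
   \<le> real N * (f x0 + h x0 - measure_pmf.expectation (rcd_iter N blk L a f grad h x0 (Suc k)) (\<lambda>y. f y + h y))"
proof (induction k)
  case 0
  have "real N > 0" using N2 by simp
  with iter_step[of x0 0] show ?case by (simp add: field_simps)
next
  case (Suc k)
  have "real N > 0" using N2 by simp
  with iter_step[of x0 "Suc k"] Suc show ?case by (simp add: field_simps)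
qed

lemma exp_lower:
  assumes bdd: "bdd_below ((\<lambda>x. f x + h x) ` {x. a \<bullet> x = b})" and x0: "a \<bullet> x0 = b"
  shows "measure_pmf.expectation (rcd_iter N blk L a f grad h x0 k) (\<lambda>y. f y + h y)
     \<ge> Inf ((\<lambda>x. f x + h x) ` {x. a \<bullet> x = b})"
proof -
  let ?M = "rcd_iter N blk L a f grad h x0 k"
  let ?I = "Inf ((\<lambda>x. f x + h x) ` {x. a \<bullet> x = b})"
  have fM: "finite (set_pmf ?M)" using iter_props by blast
  have "measure_pmf.expectation ?M (\<lambda>_. ?I) \<le> measure_pmf.expectation ?M (\<lambda>y. f y + h y)"
  proof (rule integral_mono_AE)
    show "integrable (measure_pmf ?M) (\<lambda>_. ?I)" by (rule integrable_measure_pmf_finite[OF fM])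
    show "integrable (measure_pmf ?M) (\<lambda>y. f y + h y)" by (rule integrable_measure_pmf_finite[OF fM])
    have "\<forall>y\<in>set_pmf ?M. ?I \<le> f y + h y"
    proof
      fix y assume "y \<in> set_pmf ?M"
      hence "y \<in> {x. a \<bullet> x = b}" using iter_props[of x0 k] x0 by auto
      thus "?I \<le> f y + h y" by (rule cINF_lower[OF bdd])
    qed
    thus "AE y in measure_pmf ?M. ?I \<le> f y + h y" by (simp add: AE_measure_pmf_iff)
  qed
  thus ?thesis by simp
qed

end


theorem theorem4:
  fixes N :: nat and blk :: "'n::finite \<Rightarrow> nat"
    and f :: "real ^ 'n \<Rightarrow> real" and grad :: "real ^ 'n \<Rightarrow> real ^ 'n"
    and h :: "real ^ 'n \<Rightarrow> real" and hc :: "'n \<Rightarrow> real \<Rightarrow> real"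
    and L :: "nat \<Rightarrow> nat \<Rightarrow> real" and a :: "real ^ 'n" and b :: real
    and x0 :: "real ^ 'n" and k :: nat
  assumes N2: "N \<ge> 2"
    and blk_range: "\<forall>c. blk c < N"
    and blk_nonempty: "\<forall>i<N. \<exists>c. blk c = i"
    and a_nz: "a \<noteq> 0"
    and grad: "\<forall>x. (f has_derivative (\<lambda>v. grad x \<bullet> v)) (at x)"
    and L_pos: "\<forall>i<N. \<forall>j<N. L i j > 0"
    and L_sym: "\<forall>i<N. \<forall>j<N. L i j = L j i"
    and L_lip: "\<forall>i<N. \<forall>j<N. \<forall>x. \<forall>s \<in> block_supp blk {i, j}.
        norm (block_restrict blk {i, j} (grad (x + s) - grad x)) \<le> L i j * norm s"
    and h_sep: "\<forall>x. h x = (\<Sum>c\<in>UNIV. hc c (x $ c))"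
    and hc_convex: "\<forall>c. convex_on UNIV (hc c)"
    and Fstar_finite: "bdd_below ((\<lambda>x. f x + h x) ` {x. a \<bullet> x = b})"
    and x0_feas: "a \<bullet> x0 = b"
  shows "Min ((\<lambda>l. measure_pmf.expectation (rcd_iter N blk L a f grad h x0 l)
                    (\<lambda>x. (M2 N blk L a f grad h x)^2)) ` {..k})
         \<le> real N * (f x0 + h x0 - Inf ((\<lambda>x. f x + h x) ` {x. a \<bullet> x = b})) / real (k + 1)"
  proof -
  interpret rcd N blk f grad h hc L a
    using N2 blk_range grad L_pos L_sym L_lip h_sep hc_convex by unfold_locales auto
  define e where "e l = measure_pmf.expectation (rcd_iter N blk L a f grad h x0 l)
                    (\<lambda>x. (M2 N blk L a f grad h x)^2)" for l
  let ?I = "Inf ((\<lambda>x. f x + h x) ` {x. a \<bullet> x = b})"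
  have S: "(\<Sum>l\<le>k. e l) \<le> real N * (f x0 + h x0 - ?I)"
  proof -
    have "(\<Sum>l\<le>k. e l) \<le> real N * (f x0 + h x0 - measure_pmf.expectation (rcd_iter N blk L a f grad h x0 (Suc k)) (\<lambda>y. f y + h y))"
      unfolding e_def by (rule telescope)
    also have "\<dots> \<le> real N * (f x0 + h x0 - ?I)"
      using exp_lower[OF Fstar_finite x0_feas, of "Suc k"] by (intro mult_left_mono) auto
    finally show ?thesis .
  qed
  have "real (card {..k}) * Min (e ` {..k}) \<le> (\<Sum>l\<le>k. e l)"
    by (rule sum_bounded_below) (auto intro: Min_le)
  hence "real (k + 1) * Min (e ` {..k}) \<le> real N * (f x0 + h x0 - ?I)" using S by simp
  hence "Min (e ` {..k}) \<le> real N * (f x0 + h x0 - ?I) / real (k + 1)"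
    by (simp add: field_simps)
  thus ?thesis unfolding e_def .
qed

end
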